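(* For the space $\mathcal W$ defined below, $|\mathfrak P^\omega(\mathcal W)|=c$.
   Context: Identify $\mathbb R^2$ with $\mathbb C$. $\mathcal W=\{\tfrac1{2^{n+1}}e^{2\pi i\theta}+\tfrac1n+\tfrac{i}{2^{n+1}}:n\in\mathbb N,\theta\in[0,1]\}\cup[0,1]$, base point $0$. $c=|\mathbb R|$. An $\omega$-loop at $0$ is a continuous $k:[0,1]\to\mathcal W$ with $k(0)=k(1)=0$ all of whose fibres are finite; $\mathfrak P^\omega(\mathcal W)$ is the subgroup of $\pi_1(\mathcal W,0)$ generated by homotopy classes (rel endpoints) of $\omega$-loops at $0$. *)

theory Defs
  imports "HOL-Analysis.Analysis" "HOL-Library.Equipollence"
begin

text \<open>The space W: circles of radius 1/2^(n+1) tangent to the real axis at 1/n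
  (n = 1, 2, ...), together with the unit segment [0,1] on the real axis.\<close>
definition W :: "complex set" where
  "W = {complex_of_real (1 / 2 ^ (n + 1)) * exp (2 * of_real pi * \<i> * complex_of_real \<theta>)
          + complex_of_real (1 / real n) + \<i> * complex_of_real (1 / 2 ^ (n + 1))
        | n \<theta>. n \<ge> (1::nat) \<and> \<theta> \<in> {0..1::real}}
     \<union> complex_of_real ` {0..1}"

definition loop_at0 :: "(real \<Rightarrow> complex) \<Rightarrow> bool" where
  "loop_at0 k \<longleftrightarrow> path k \<and> path_image k \<subseteq> W \<and> pathstart k = 0 \<and> pathfinish k = 0"

definition omega_loop :: "(real \<Rightarrow> complex) \<Rightarrow> bool" where
  "omega_loop k \<longleftrightarrow> loop_at0 k \<and> (\<forall>x. finite {t \<in> {0..1}. k t = x})"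

definition hclass :: "(real \<Rightarrow> complex) \<Rightarrow> (real \<Rightarrow> complex) set" where
  "hclass p = {q. homotopic_paths W p q}"

text \<open>Representatives of the subgroup of pi_1(W,0) generated by the classes of omega-loops:
  closure of the omega-loops under identity, inverses (reversal) and products (concatenation).\<close>
inductive_set omega_words :: "(real \<Rightarrow> complex) set" where
  unit: "linepath 0 0 \<in> omega_words"
| gen: "omega_loop k \<Longrightarrow> k \<in> omega_words"
| inv: "p \<in> omega_words \<Longrightarrow> reversepath p \<in> omega_words"
| mult: "p \<in> omega_words \<Longrightarrow> q \<in> omega_words \<Longrightarrow> p +++ q \<in> omega_words"

definition P_omega :: "(real \<Rightarrow> complex) set set" where
  "P_omega = hclass ` omega_words"

end

theory Submission
  imports Defs "HOL-Complex_Analysis.Complex_Analysis"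
begin

definition rr :: "nat \<Rightarrow> real" where "rr n = 1 / 2 ^ (n + 1)"
definition cc :: "nat \<Rightarrow> complex" where "cc n = complex_of_real (1 / real n) + \<i> * complex_of_real (rr n)"
definition circp :: "nat \<Rightarrow> real \<Rightarrow> complex" where
  "circp n v = cc n + complex_of_real (rr n) * exp (\<i> * complex_of_real (- (pi / 2) + 2 * pi * v))"
definition seg :: "nat \<Rightarrow> real \<Rightarrow> complex" where
  "seg n v = complex_of_real (1 / real (n+1) + v * (1 / real n - 1 / real (n+1)))"
definition piece :: "nat set \<Rightarrow> nat \<Rightarrow> real \<Rightarrow> complex" where
  "piece S n u = (if n \<in> S then (if u \<le> 1/2 then seg n (2*u) else circp n (2*u-1)) else seg n u)"
definition gg :: "nat set \<Rightarrow> real \<Rightarrow> complex" where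
  "gg S t = (if t \<le> 0 then 0 else piece S (nat \<lfloor>1/t\<rfloor>) (real (nat \<lfloor>1/t\<rfloor>) * real (nat \<lfloor>1/t\<rfloor> + 1) * t - real (nat \<lfloor>1/t\<rfloor>)))"
definition kk :: "nat set \<Rightarrow> real \<Rightarrow> complex" where
  "kk S = gg S +++ linepath 1 0"

lemma rr_pos: "rr n > 0" by (simp add: rr_def)

lemma pow_bound: "real n * real (n+1) < 2 ^ (n+1)"
proof (induction n)
  case 0 then show ?case by simp
next
  case (Suc n)
  show ?case
  proof (cases "n \<le> 1")
    case True then have "n = 0 \<or> n = 1" by auto
    then show ?thesis by auto
  next
    case False
    have "real (Suc n) * real (Suc n + 1) = real n * real (n+1) + 2 * real (n+1)" by (simp add: algebra_simps)
    have "real (Suc n) * real (Suc n + 1) = real n * real (n+1) + 2 * real (n+1)" by (simp add: algebra_simps)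
    also have "\<dots> < 2^(n+1) + 2 * real (n+1)" using Suc by simp
    also have "2 * real (n+1) \<le> real n * real (n+1)" using False
      by (intro mult_right_mono) auto
    finally show ?thesis using Suc by simp
  qed
qed

lemma rr_le: "n \<ge> 1 \<Longrightarrow> rr n \<le> 1 / real n - 1 / real (n+1)"
proof -
  assume n: "n \<ge> 1"
  have "1 / real n - 1 / real (n+1) = 1 / (real n * real (n+1))" using n by (simp add: field_simps)
  also have "rr n \<le> \<dots>" unfolding rr_def using pow_bound[of n] n
    by (intro divide_left_mono) auto
  finally show ?thesis .
qed

lemma sep: assumes "n \<ge> 1" "m \<ge> 1" "n \<noteq> m" shows "\<bar>1 / real n - 1 / real m\<bar> > rr n"
proof (cases "n < m")
  case True
  have "1/real m \<le> 1/real (n+1)" using True assms by (simp add: frac_le)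
  moreover have "rr n < 1 / real n - 1 / real (n+1)"
  proof -
    have "1 / real n - 1 / real (n+1) = 1 / (real n * real (n+1))" using assms by (simp add: field_simps)
    also have "rr n < \<dots>" unfolding rr_def using pow_bound[of n] assms
      by (intro divide_strict_left_mono) auto
    finally show ?thesis .
  qed
  ultimately show ?thesis by simp
next
  case False
  then have mn: "m < n" using assms by simp
  have "1/real n \<le> 1/real (m+1)" using mn assms by (simp add: frac_le)
  moreover have "rr m < 1 / real m - 1 / real (m+1)"
  proof -
    have "1 / real m - 1 / real (m+1) = 1 / (real m * real (m+1))" using assms by (simp add: field_simps)
    also have "rr m < \<dots>" unfolding rr_def using pow_bound[of m] assms
      by (intro divide_strict_left_mono) auto
    finally show ?thesis .
  qed
  moreover have "rr n \<le> rr m" unfolding rr_def using mn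
    by (intro divide_left_mono) auto
  ultimately show ?thesis by simp
qed


lemma exp_mhalf: "exp (\<i> * complex_of_real (- (pi / 2))) = - \<i>"
  by (simp add: exp_Euler cos_of_real sin_of_real flip: of_real_minus) (simp add: of_real_minus)

lemma exp_3half: "exp (\<i> * complex_of_real (- (pi / 2) + 2 * pi)) = - \<i>"
proof -
  have "\<i> * complex_of_real (- (pi / 2) + 2 * pi) = \<i> * complex_of_real (- (pi / 2)) + 2 * of_real pi * \<i>"
    by (simp add: algebra_simps)
  then show ?thesis by (simp only: exp_add exp_mhalf exp_two_pi_i) simp
qed

lemma circp_0: "circp n 0 = complex_of_real (1 / real n)"
  unfolding circp_def cc_def using exp_mhalf by (simp add: algebra_simps)

lemma circp_1: "circp n 1 = complex_of_real (1 / real n)"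
  unfolding circp_def cc_def using exp_3half by (simp add: algebra_simps)

lemma seg_0: "seg n 0 = complex_of_real (1 / real (n+1))"
  by (simp add: seg_def)

lemma seg_1: "seg n 1 = complex_of_real (1 / real n)"
  by (simp add: seg_def)

lemma piece_0: "piece S n 0 = complex_of_real (1 / real (n+1))"
  by (simp add: piece_def seg_0)

lemma piece_1: "piece S n 1 = complex_of_real (1 / real n)"
  by (simp add: piece_def seg_1 circp_1)

lemma continuous_seg: "continuous_on A (seg n)"
  unfolding seg_def by (intro continuous_intros)

lemma continuous_circp: "continuous_on A (circp n)"
  unfolding circp_def by (intro continuous_intros)

lemma continuous_piece: "continuous_on {0..1} (piece S n)"
proof (cases "n \<in> S")
  case False then show ?thesis
    by (simp add: piece_def continuous_seg)
next
  case True
  have "continuous_on {0..1} (\<lambda>u. if u \<le> 1/2 then seg n (2*u) else circp n (2*u-1))"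
  proof (rule continuous_on_cases_le[where h="\<lambda>u. u"])
    fix u assume "u \<in> {0..1::real}" "u = 1/2"
    then have "2*u = 1" "2*u-1 = 0" by auto
    then show "seg n (2*u) = circp n (2*u-1)" by (simp add: seg_1 circp_0)
  qed (auto intro!: continuous_on_compose2[OF continuous_seg] continuous_on_compose2[OF continuous_circp]
             continuous_intros)
  then show ?thesis using True by (simp add: piece_def)
qed

lemma norm_circp: "cmod (circp n v - cc n) = rr n"
  unfolding circp_def using rr_pos[of n] by (simp add: norm_mult)

lemma Re_circp: "\<bar>Re (circp n v) - 1 / real n\<bar> \<le> rr n"
proof -
  have "Re (circp n v) - 1 / real n = Re (circp n v - cc n)" by (simp add: cc_def)
  also have "\<bar>\<dots>\<bar> \<le> cmod (circp n v - cc n)" by (rule abs_Re_le_cmod)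
  finally show ?thesis by (simp add: norm_circp)
qed

lemma Im_seg [simp]: "Im (seg n v) = 0"
  by (simp add: seg_def)

lemma Re_seg: "n \<ge> 1 \<Longrightarrow> v \<in> {0..1} \<Longrightarrow> 1 / real (n+1) \<le> Re (seg n v) \<and> Re (seg n v) \<le> 1 / real n"
proof -
  assume n: "n \<ge> 1" and v: "v \<in> {0..1}"
  have d: "0 \<le> 1 / real n - 1 / real (n+1)"
    using n by (auto simp: frac_le)
  have "v * (1 / real n - 1 / real (n+1)) \<le> 1 * (1 / real n - 1 / real (n+1))"
    using v d by (intro mult_right_mono) auto
  moreover have "0 \<le> v * (1 / real n - 1 / real (n+1))" using v d by simp
  ultimately show ?thesis by (simp add: seg_def)
qed


lemma floor_props:
  assumes "0 < t" "t \<le> 1"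
  shows "nat \<lfloor>1/t\<rfloor> \<ge> 1 \<and> 1 / real (nat \<lfloor>1/t\<rfloor> + 1) < t \<and> t \<le> 1 / real (nat \<lfloor>1/t\<rfloor>)"
proof -
  have ge1: "1 \<le> 1/t" using assms by simp
  then have fl: "1 \<le> \<lfloor>1/t\<rfloor>" by simp
  define n where "n = nat \<lfloor>1/t\<rfloor>"
  have i: "int n = \<lfloor>1/t\<rfloor>" unfolding n_def by (rule nat_0_le) (use fl in linarith)
  have rn: "real n = of_int \<lfloor>1/t\<rfloor>" using i by (metis of_int_of_nat_eq)
  have a: "real n \<le> 1/t" using rn by simp
  have b: "1/t < real n + 1" using rn by linarith
  have "int n \<ge> 1" using i fl by simp
  then have n1: "n \<ge> 1" by simp
  have "t \<le> 1 / real n" using a assms n1 by (simp add: field_simps)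
  moreover have "1 / real (n+1) < t" using b assms by (simp add: field_simps)
  ultimately show ?thesis using n1 by (simp add: n_def)
qed

lemma gg_I:
  assumes n: "n \<ge> 1" and t: "t \<in> {1 / real (n+1) .. 1 / real n}"
  shows "gg S t = piece S n (real n * real (n+1) * t - real n)"
proof -
  have tpos: "t > 0" using t by (auto intro: less_le_trans[of 0 "1 / real (n+1)"])
  show ?thesis
  proof (cases "t = 1 / real (n+1)")
    case True
    have fl: "nat \<lfloor>1/t\<rfloor> = n + 1" using True by simp
    have e: "real (n+1) * t = 1" using True by simp
    have "real (n+1) * real (n+1+1) * t - real (n+1) = real (n+1+1) * (real (n+1) * t) - real (n+1)"
      by (simp add: algebra_simps)
    also have "\<dots> = 1" using e by simp
    finally have e1: "real (n+1) * real (n+1+1) * t - real (n+1) = 1" .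
    have "real n * real (n+1) * t - real n = real n * (real (n+1) * t) - real n"
      by (simp add: algebra_simps)
    also have "\<dots> = 0" using e by simp
    finally have e2: "real n * real (n+1) * t - real n = 0" .
    have "gg S t = piece S (nat \<lfloor>1/t\<rfloor>) (real (nat \<lfloor>1/t\<rfloor>) * real (nat \<lfloor>1/t\<rfloor> + 1) * t - real (nat \<lfloor>1/t\<rfloor>))"
      using tpos by (simp add: gg_def)
    also have "\<dots> = piece S (n+1) 1" by (simp only: fl e1)
    also have "\<dots> = piece S n (real n * real (n+1) * t - real n)" by (simp only: e2 piece_0 piece_1)
    finally show ?thesis .
  next
    case False
    then have t1: "1 / real (n+1) < t" "t \<le> 1 / real n" using t by auto
    have "real n \<le> 1/t" using t1 n tpos by (simp add: field_simps)
    moreover have "1/t < real n + 1" using t1 tpos by (simp add: field_simps)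
    ultimately have "\<lfloor>1/t\<rfloor> = int n" by (simp add: floor_eq_iff)
    then have "nat \<lfloor>1/t\<rfloor> = n" by simp
    then show ?thesis using tpos by (simp add: gg_def)
  qed
qed

lemma affine_range:
  assumes n: "n \<ge> 1" and t: "t \<in> {1 / real (n+1) .. 1 / real n}"
  shows "real n * real (n+1) * t - real n \<in> {0..1}"
proof -
  have "real n * real (n+1) * (1 / real (n+1)) \<le> real n * real (n+1) * t"
    using t by (intro mult_left_mono) auto
  moreover have "real n * real (n+1) * t \<le> real n * real (n+1) * (1 / real n)"
    using t by (intro mult_left_mono) auto
  moreover have "real n * real (n+1) * (1 / real (n+1)) = real n" by simp
  moreover have "real n * real (n+1) * (1 / real n) = real n + 1" using n by simp
  ultimately show ?thesis by simp
qed

lemma continuous_gg_I: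
  assumes n: "n \<ge> 1"
  shows "continuous_on {1 / real (n+1) .. 1 / real n} (gg S)"
proof -
  have "continuous_on {1 / real (n+1) .. 1 / real n} (\<lambda>t. piece S n (real n * real (n+1) * t - real n))"
  proof (rule continuous_on_compose2[OF continuous_piece])
    show "continuous_on {1 / real (n+1) .. 1 / real n} (\<lambda>t. real n * real (n+1) * t - real n)"
      by (intro continuous_intros)
    show "(\<lambda>t. real n * real (n+1) * t - real n) ` {1 / real (n+1) .. 1 / real n} \<subseteq> {0..1}"
      using affine_range[OF n] by blast
  qed
  then show ?thesis
    by (rule continuous_on_eq) (simp add: gg_I[OF n])
qed

lemma continuous_gg_tail: "continuous_on {1 / real (M+2) .. 1} (gg S)"
proof (induction M)
  case 0
  then show ?case using continuous_gg_I[of 1 S] by simp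
next
  case (Suc M)
  have f1: "1 / real (M+3) \<le> 1 / real (M+2)" by (intro divide_left_mono) auto
  have f2: "1 / real (M+2) \<le> 1" by simp
  have f3: "1 / (2 + real M) \<le> 1" by simp
  have eq: "{1 / real (Suc M + 2) .. 1} = {1 / real ((M+2)+1) .. 1 / real (M+2)} \<union> {1 / real (M+2) .. 1}"
    using f1 f2 by (auto simp: numeral_3_eq_3) (use f3 in linarith)
  show ?case unfolding eq
    by (rule continuous_on_closed_Un) (use continuous_gg_I[of "M+2" S] Suc in auto)
qed

lemma piece_bounds:
  assumes n: "n \<ge> 1" and u: "u \<in> {0..1}"
  shows "1 / real (n+1) \<le> Re (piece S n u) \<and> cmod (piece S n u) \<le> 3 / real n"
proof -
  have segb: "1 / real (n+1) \<le> Re (seg n v) \<and> cmod (seg n v) \<le> 3 / real n" if "v \<in> {0..1}" for v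
  proof -
    have "cmod (seg n v) = \<bar>Re (seg n v)\<bar>" by (simp add: cmod_def)
    moreover have "1 / real n \<le> 3 / real n" by (simp add: divide_right_mono)
    moreover have "0 \<le> 1 / real (n+1)" by simp
    ultimately show ?thesis using Re_seg[OF n that] by linarith
  qed
  have circb: "1 / real (n+1) \<le> Re (circp n v) \<and> cmod (circp n v) \<le> 3 / real n" for v
  proof -
    have r1: "rr n \<le> 1 / real n - 1 / real (n+1)" by (rule rr_le[OF n])
    have r2: "1 / real (n+1) \<ge> 0" by simp
    have "cmod (cc n) \<le> 1 / real n + rr n" unfolding cc_def
      using norm_triangle_ineq[of "complex_of_real (1 / real n)" "\<i> * complex_of_real (rr n)"] rr_pos[of n]
      by (simp add: norm_mult norm_divide)
    moreover have "cmod (circp n v) \<le> cmod (cc n) + cmod (circp n v - cc n)"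
      using norm_triangle_ineq[of "cc n" "circp n v - cc n"] by simp
    ultimately have "cmod (circp n v) \<le> 1 / real n + 2 * rr n" by (simp add: norm_circp)
    moreover have "1 / real n + 2 * rr n \<le> 3 / real n"
    proof -
      have "3 / real n = 3 * (1 / real n)" by simp
      then show ?thesis using r1 r2 by linarith
    qed
    ultimately show ?thesis using Re_circp[of n v] r1 by linarith
  qed
  show ?thesis
  proof (cases "n \<in> S")
    case False then show ?thesis using segb[OF u] by (simp add: piece_def)
  next
    case True
    show ?thesis
    proof (cases "u \<le> 1/2")
      case True
      then have "2*u \<in> {0..1}" using u by auto
      then show ?thesis using segb[of "2*u"] True \<open>n \<in> S\<close> by (simp add: piece_def)
    next
      case False
      then show ?thesis using circb[of "2*u-1"] \<open>n \<in> S\<close> by (simp add: piece_def)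
    qed
  qed
qed

lemma gg_bounds:
  assumes t: "t \<in> {0..1}"
  shows "t / 2 \<le> Re (gg S t) \<and> cmod (gg S t) \<le> 6 * t"
proof (cases "t = 0")
  case True then show ?thesis by (simp add: gg_def)
next
  case False
  then have tp: "0 < t" "t \<le> 1" using t by auto
  define n where "n = nat \<lfloor>1/t\<rfloor>"
  have fp: "n \<ge> 1" "1 / real (n+1) < t" "t \<le> 1 / real n" using floor_props[OF tp] by (auto simp: n_def)
  have g: "gg S t = piece S n (real n * real (n+1) * t - real n)"
    using gg_I[OF fp(1)] fp by auto
  have pb: "1 / real (n+1) \<le> Re (gg S t) \<and> cmod (gg S t) \<le> 3 / real n"
    unfolding g by (rule piece_bounds[OF fp(1) affine_range]) (use fp in auto)
  have "1 / real n \<le> 2 / real (n+1)" using fp(1) by (simp add: field_simps)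
  moreover have "2 / real (n+1) < 2*t" using fp(2) by simp
  ultimately have "1 / real n \<le> 2 * t" by linarith
  then have "3 / real n \<le> 6 * t" by simp
  moreover have "t / 2 \<le> 1 / real (n+1)"
  proof -
    have "t \<le> 2 / real (n+1)" using fp(3) \<open>1 / real n \<le> 2 / real (n+1)\<close> by linarith
    then show ?thesis by simp
  qed
  ultimately show ?thesis using pb by linarith
qed

lemma continuous_gg: "continuous_on {0..1} (gg S)"
  unfolding continuous_on_eq_continuous_within
proof
  fix x :: real assume x: "x \<in> {0..1}"
  show "continuous (at x within {0..1}) (gg S)"
  proof (cases "x = 0")
    case True
    have g0: "gg S 0 = 0" by (simp add: gg_def)
    have "(gg S \<longlongrightarrow> 0) (at 0 within {0..1})"
    proof (rule Lim_null_comparison)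
      show "\<forall>\<^sub>F t in at 0 within {0..1}. cmod (gg S t) \<le> 6 * t"
        unfolding eventually_at by (rule exI[of _ 1]) (auto intro: gg_bounds[THEN conjunct2])
      show "((\<lambda>t. 6 * t) \<longlongrightarrow> 0) (at (0::real) within {0..1})"
        by (auto intro!: tendsto_eq_intros)
    qed
    then show ?thesis using True g0 by (simp add: continuous_within)
  next
    case False
    then have xp: "0 < x" using x by auto
    obtain M :: nat where M: "1 / x < real M" using reals_Archimedean2 by blast
    have "1 / real (M+2) < x" using M xp
      by (simp add: field_simps)
    then have xin: "x \<in> {1 / real (M+2) .. 1}" using x by auto
    have p1: "0 < 1 / (2 + real M)" by simp
    have "continuous (at x within {1 / real (M+2) .. 1}) (gg S)"
      using continuous_gg_tail[of M S] xin by (simp add: continuous_on_eq_continuous_within)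
    moreover have "at x within {0..1} = at x within {1 / real (M+2) .. 1}"
      by (rule at_within_nhd[where S="{1 / real (M+2) <..}"]) (use \<open>1 / real (M+2) < x\<close> in \<open>auto intro: less_imp_le[OF order.strict_trans[OF p1]]\<close>)
    ultimately show ?thesis by (simp add: continuous_within)
  qed
qed


lemma real_in_W: "x \<in> {0..1} \<Longrightarrow> complex_of_real x \<in> W"
  unfolding W_def by blast

lemma seg_in_W: assumes "n \<ge> 1" "v \<in> {0..1}" shows "seg n v \<in> W"
proof -
  have b: "1 / real n \<le> 1" "0 \<le> 1 / real (n+1)" using assms by auto
  have a: "1 / real (n+1) \<le> Re (seg n v)" "Re (seg n v) \<le> 1 / real n" using Re_seg[OF assms] by auto
  have "Re (seg n v) \<in> {0..1}" unfolding atLeastAtMost_iff using a b by linarith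
  then have "complex_of_real (Re (seg n v)) \<in> W" by (rule real_in_W)
  then show ?thesis by (simp add: seg_def)
qed

lemma circp_in_W: assumes n: "n \<ge> 1" and v: "v \<in> {0..1}" shows "circp n v \<in> W"
proof -
  define \<theta> where "\<theta> = (if v < 1/4 then v + 3/4 else v - 1/4)"
  have th: "\<theta> \<in> {0..1}" using v by (auto simp: \<theta>_def)
  have e: "exp (\<i> * complex_of_real (- (pi / 2) + 2 * pi * v)) = exp (2 * of_real pi * \<i> * complex_of_real \<theta>)"
  proof (cases "v < 1/4")
    case True
    have "2 * of_real pi * \<i> * complex_of_real \<theta> = \<i> * complex_of_real (- (pi / 2) + 2 * pi * v) + 2 * of_real pi * \<i>"
      using True by (simp add: \<theta>_def algebra_simps)
    then show ?thesis by (simp only: exp_add exp_two_pi_i) simp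
  next
    case False
    have h: "2 * of_real pi * \<i> * complex_of_real \<theta> = \<i> * complex_of_real (- (pi / 2) + 2 * pi * v)"
      using False by (simp add: \<theta>_def algebra_simps)
    show ?thesis by (simp only: h)
  qed
  have "circp n v = complex_of_real (1 / 2 ^ (n + 1)) * exp (2 * of_real pi * \<i> * complex_of_real \<theta>)
          + complex_of_real (1 / real n) + \<i> * complex_of_real (1 / 2 ^ (n + 1))"
    unfolding circp_def cc_def rr_def e by (simp add: algebra_simps)
  then show ?thesis unfolding W_def using n th by blast
qed

lemma piece_in_W: assumes n: "n \<ge> 1" and u: "u \<in> {0..1}" shows "piece S n u \<in> W"
  unfolding piece_def using u by (auto intro!: seg_in_W circp_in_W n)

lemma gg_in_W: assumes t: "t \<in> {0..1}" shows "gg S t \<in> W"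
proof (cases "t = 0")
  case True then show ?thesis using real_in_W[of 0] by (simp add: gg_def)
next
  case False
  then have tp: "0 < t" "t \<le> 1" using t by auto
  define n where "n = nat \<lfloor>1/t\<rfloor>"
  have fp: "n \<ge> 1" "1 / real (n+1) < t" "t \<le> 1 / real n" using floor_props[OF tp] by (auto simp: n_def)
  have g: "gg S t = piece S n (real n * real (n+1) * t - real n)"
    using gg_I[OF fp(1)] fp by auto
  show ?thesis unfolding g by (rule piece_in_W[OF fp(1) affine_range]) (use fp in auto)
qed

lemma gg_0: "gg S 0 = 0" by (simp add: gg_def)
lemma gg_1: "gg S 1 = 1" using gg_I[of 1 1 S] by (simp add: piece_1)

lemma path_gg: "path (gg S)" unfolding path_def by (rule continuous_gg)

lemma path_image_gg: "path_image (gg S) \<subseteq> W"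
  unfolding path_image_def using gg_in_W by blast

lemma segment10_W: "closed_segment 1 0 \<subseteq> (W::complex set)"
proof
  fix z :: complex assume "z \<in> closed_segment 1 0"
  then obtain u :: real where u: "0 \<le> u" "u \<le> 1" "z = (1 - u) *\<^sub>R 1 + u *\<^sub>R 0"
    unfolding closed_segment_def by blast
  then have "z = complex_of_real (1 - u)" by (simp add: scaleR_conv_of_real)
  moreover have "1 - u \<in> {0..1}" using u by auto
  ultimately show "z \<in> W" using real_in_W by blast
qed

lemma pf_gg: "pathfinish (gg S) = pathstart (linepath 1 0)"
  by (simp add: pathfinish_def gg_1)

lemma path_kk: "path (kk S)"
  unfolding kk_def using path_join[OF pf_gg] path_gg by auto

lemma path_image_kk: "path_image (kk S) = path_image (gg S) \<union> closed_segment 1 0"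
  unfolding kk_def using path_image_join[OF pf_gg] by simp

lemma kk_loop: "loop_at0 (kk S)"
  unfolding loop_at0_def
  using path_kk[of S] path_image_kk[of S] path_image_gg[of S] segment10_W
  by (simp add: kk_def pathstart_def pathfinish_def gg_0 joinpaths_def linepath_def)


lemma exp_fibre_finite: "finite {v \<in> {-1..1::real}. exp (\<i> * complex_of_real (a + 2 * pi * v)) = w}"
  (is "finite ?F")
proof (cases "?F = {}")
  case True then show ?thesis by (simp only: True finite.emptyI)
next
  case False
  then obtain v0 where v0: "v0 \<in> ?F" by blast
  have "?F \<subseteq> (\<lambda>k::int. v0 + of_int k) ` {-2..2}"
  proof
    fix v assume v: "v \<in> ?F"
    then have "exp (\<i> * complex_of_real (a + 2 * pi * v)) = exp (\<i> * complex_of_real (a + 2 * pi * v0))"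
      using v0 by simp
    then obtain k :: int where k: "\<i> * complex_of_real (a + 2 * pi * v) = \<i> * complex_of_real (a + 2 * pi * v0) + of_int (2 * k) * pi * \<i>"
      unfolding exp_eq by blast
    then have "Im (\<i> * complex_of_real (a + 2 * pi * v)) = Im (\<i> * complex_of_real (a + 2 * pi * v0) + of_int (2 * k) * pi * \<i>)"
      by simp
    then have "a + 2 * pi * v = a + 2 * pi * v0 + 2 * of_int k * pi" by simp
    then have "2 * pi * v = 2 * pi * (v0 + of_int k)" by (simp add: algebra_simps)
    then have vk: "v = v0 + of_int k" by simp
    have "of_int k \<le> (2::real)" "(-2::real) \<le> of_int k" using v v0 vk by auto
    then have "k \<in> {-2..2}" by simp
    then show "v \<in> (\<lambda>k::int. v0 + of_int k) ` {-2..2}" using vk by blast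
  qed
  then show ?thesis by (rule finite_subset) simp
qed

lemma seg_fibre: assumes n: "n \<ge> 1" shows "{u. seg n u = x} \<subseteq> {(Re x - 1 / real (n+1)) / (1 / real n - 1 / real (n+1))}"
proof
  fix u assume "u \<in> {u. seg n u = x}"
  define d where "d = 1 / real n - 1 / real (n+1)"
  define a where "a = 1 / real (n+1)"
  have "seg n u = x" using \<open>u \<in> {u. seg n u = x}\<close> by simp
  then have "Re x = a + u * d" unfolding seg_def a_def d_def by auto
  moreover have "d \<noteq> 0" unfolding d_def using rr_le[OF n] rr_pos[of n] by linarith
  ultimately have "u = (Re x - a) / d" by (simp add: eq_divide_eq)
  then show "u \<in> {(Re x - 1 / real (n+1)) / (1 / real n - 1 / real (n+1))}" by (simp add: a_def d_def)
qed

lemma piece_fibre_finite: assumes n: "n \<ge> 1" shows "finite {u \<in> {0..1}. piece S n u = x}"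
proof (cases "n \<in> S")
  case False
  then have "{u \<in> {0..1}. piece S n u = x} \<subseteq> {u. seg n u = x}" by (auto simp: piece_def)
  then show ?thesis by (rule finite_subset[OF _ finite_subset[OF seg_fibre[OF n]]]) simp
next
  case True
  define w where "w = (x - cc n) / complex_of_real (rr n)"
  have A: "{u \<in> {0..1}. piece S n u = x} \<subseteq> (\<lambda>u. u / 2) ` {u. seg n u = x}
     \<union> (\<lambda>v. (v + 1) / 2) ` {v \<in> {-1..1::real}. exp (\<i> * complex_of_real (- (pi / 2) + 2 * pi * v)) = w}"
  proof
    fix u assume u: "u \<in> {u \<in> {0..1}. piece S n u = x}"
    show "u \<in> (\<lambda>u. u / 2) ` {u. seg n u = x}
     \<union> (\<lambda>v. (v + 1) / 2) ` {v \<in> {-1..1::real}. exp (\<i> * complex_of_real (- (pi / 2) + 2 * pi * v)) = w}"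
    proof (cases "u \<le> 1/2")
      case True
      then have "seg n (2*u) = x" using u \<open>n \<in> S\<close> by (auto simp: piece_def)
      then show ?thesis by (auto intro!: image_eqI[of _ _ "2*u"])
    next
      case False
      then have c: "circp n (2*u-1) = x" using u \<open>n \<in> S\<close> by (auto simp: piece_def)
      have "complex_of_real (rr n) \<noteq> 0" using rr_pos[of n] by simp
      then have "exp (\<i> * complex_of_real (- (pi / 2) + 2 * pi * (2*u-1))) = w"
        using c unfolding w_def circp_def by (simp add: field_simps)
      moreover have "2*u-1 \<in> {-1..1}" using u by auto
      ultimately show ?thesis by (auto intro!: image_eqI[of _ _ "2*u-1"])
    qed
  qed
  have fs: "finite {u. seg n u = x}" by (rule finite_subset[OF seg_fibre[OF n]]) simp
  show ?thesis by (rule finite_subset[OF A]) (intro finite_UnI finite_imageI fs exp_fibre_finite)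
qed

lemma gg_fibre_finite: "finite {t \<in> {0..1}. gg S t = x}"
proof (cases "x = 0")
  case True
  have "{t \<in> {0..1}. gg S t = x} \<subseteq> {0}"
  proof
    fix t assume t: "t \<in> {t \<in> {0..1}. gg S t = x}"
    then have "t / 2 \<le> 0" using gg_bounds[of t S] True by auto
    then show "t \<in> {0}" using t by auto
  qed
  then show ?thesis by (rule finite_subset) simp
next
  case False
  define N where "N = nat \<lceil>6 / cmod x\<rceil>"
  have "{t \<in> {0..1}. gg S t = x} \<subseteq> (\<Union>n\<in>{1..N}. (\<lambda>u. (u + real n) / (real n * real (n+1))) ` {u \<in> {0..1}. piece S n u = x})"
  proof
    fix t assume t: "t \<in> {t \<in> {0..1}. gg S t = x}"
    then have tp: "0 < t" "t \<le> 1" using False gg_0[of S] by (auto simp: le_less)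
    define n where "n = nat \<lfloor>1/t\<rfloor>"
    have fp: "n \<ge> 1" "1 / real (n+1) < t" "t \<le> 1 / real n" using floor_props[OF tp] by (auto simp: n_def)
    define u where "u = real n * real (n+1) * t - real n"
    have g: "gg S t = piece S n u" unfolding u_def using gg_I[OF fp(1)] fp by auto
    have u01: "u \<in> {0..1}" unfolding u_def by (rule affine_range[OF fp(1)]) (use fp in auto)
    have nz: "real n * real (n+1) \<noteq> 0" using fp(1) by simp
    have "u + real n = (real n * real (n+1)) * t" by (simp add: u_def)
    then have tu: "t = (u + real n) / (real n * real (n+1))" using nz by (metis nonzero_mult_div_cancel_left)
    have "cmod x \<le> 6 * t" using gg_bounds[of t S] t by auto
    moreover have "0 < cmod x" using False by simp
    ultimately have "1 / t \<le> 6 / cmod x" using tp by (simp add: divide_simps mult.commute)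
    moreover have "real n \<le> 1 / t"
    proof -
      have "\<lfloor>1/t\<rfloor> \<ge> 0" using tp by simp
      then have "real n = of_int \<lfloor>1/t\<rfloor>" by (simp add: n_def)
      then show ?thesis by linarith
    qed
    ultimately have "real n \<le> real N" unfolding N_def by linarith
    then have "n \<in> {1..N}" using fp(1) by simp
    have "t \<in> (\<lambda>u. (u + real n) / (real n * real (n+1))) ` {u \<in> {0..1}. piece S n u = x}"
      by (rule image_eqI[where x=u]) (use g t u01 tu in auto)
    then show "t \<in> (\<Union>n\<in>{1..N}. (\<lambda>u. (u + real n) / (real n * real (n+1))) ` {u \<in> {0..1}. piece S n u = x})"
      using \<open>n \<in> {1..N}\<close> by (rule UN_I[rotated])
  qed
  then show ?thesis by (rule finite_subset) (rule finite_UN_I, simp, rule finite_imageI, rule piece_fibre_finite, simp)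
qed

lemma kk_fibre_finite: "finite {t \<in> {0..1}. kk S t = x}"
proof -
  have "{t \<in> {0..1}. kk S t = x} \<subseteq> (\<lambda>s. s / 2) ` {s \<in> {0..1}. gg S s = x} \<union> {(2 - Re x) / 2}"
  proof
    fix t assume t: "t \<in> {t \<in> {0..1}. kk S t = x}"
    show "t \<in> (\<lambda>s. s / 2) ` {s \<in> {0..1}. gg S s = x} \<union> {(2 - Re x) / 2}"
    proof (cases "t \<le> 1/2")
      case True
      then have "gg S (2*t) = x" "2*t \<in> {0..1}" using t by (auto simp: kk_def joinpaths_def)
      then show ?thesis by (auto intro!: image_eqI[of _ _ "2*t"])
    next
      case False
      then have "x = linepath 1 0 (2*t-1)" using t by (auto simp: kk_def joinpaths_def)
      then have "Re x = 2 - 2*t" by (simp add: linepath_def)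
      then show ?thesis by simp
    qed
  qed
  then show ?thesis by (rule finite_subset) (intro finite_UnI finite_imageI gg_fibre_finite finite.insertI finite.emptyI)
qed

lemma omega_kk: "omega_loop (kk S)"
  unfolding omega_loop_def using kk_loop kk_fibre_finite by blast


definition ray :: "nat \<Rightarrow> complex set" where
  "ray m = {cc m + \<i> * complex_of_real y | y. y \<ge> 0}"

lemma ray_Re_Im: "z \<in> ray m \<Longrightarrow> Re z = 1 / real m \<and> Im z \<ge> rr m"
  unfolding ray_def cc_def by auto

lemma real_notin_ray: "Im z = 0 \<Longrightarrow> z \<notin> ray m"
  using ray_Re_Im[of z m] rr_pos[of m] by auto

lemma circ_notin_ray:
  assumes "n \<ge> 1" "m \<ge> 1" "n \<noteq> m" "\<bar>Re z - 1 / real n\<bar> \<le> rr n"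
  shows "z \<notin> ray m"
  using ray_Re_Im[of z m] sep[OF assms(1-3)] assms(4) by auto

lemma wn_zero_ray:
  assumes g: "path g" "pathfinish g = pathstart g" and avoid: "path_image g \<inter> ray m = {}"
  shows "winding_number g (cc m) = 0"
proof (rule winding_number_zero_in_outside[OF g])
  show "cc m \<in> outside (path_image g)"
    unfolding outside_connected_component_lt
  proof (clarify)
    fix B :: real
    define Y where "Y = \<bar>B\<bar> + cmod (cc m) + 1"
    define y where "y = cc m + \<i> * complex_of_real Y"
    have "cmod (\<i> * complex_of_real Y) \<le> cmod y + cmod (cc m)"
      using norm_triangle_ineq4[of y "cc m"] by (simp add: y_def)
    moreover have "cmod (\<i> * complex_of_real Y) = Y"
    proof -
      have "Y \<ge> 0" unfolding Y_def by simp
      then show ?thesis by (simp add: norm_mult)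
    qed
    ultimately have "Y \<le> cmod y + cmod (cc m)" by simp
    then have "B < cmod y" unfolding Y_def by linarith
    moreover have "connected_component (- path_image g) (cc m) y"
      unfolding connected_component_def
    proof (intro exI conjI)
      show "connected (closed_segment (cc m) y)" by simp
      show "cc m \<in> closed_segment (cc m) y" "y \<in> closed_segment (cc m) y" by auto
      have "closed_segment (cc m) y \<subseteq> ray m"
      proof
        fix z assume "z \<in> closed_segment (cc m) y"
        then obtain u :: real where u: "0 \<le> u" "u \<le> 1" "z = (1 - u) *\<^sub>R cc m + u *\<^sub>R y"
          unfolding closed_segment_def by blast
        then have "z = cc m + \<i> * complex_of_real (u * Y)"
          by (simp add: y_def scaleR_conv_of_real algebra_simps)
        moreover have "u * Y \<ge> 0" using u by (simp add: Y_def)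
        ultimately show "z \<in> ray m" unfolding ray_def by blast
      qed
      then show "closed_segment (cc m) y \<subseteq> - path_image g" using avoid by blast
    qed
    ultimately show "\<exists>y. B < cmod y \<and> connected_component (- path_image g) (cc m) y" by blast
  qed
qed

definition aa :: "nat \<Rightarrow> real" where "aa n = (real n + 1/2) / (real n * real (n+1))"

lemma gg_cases:
  assumes t: "t \<in> {0..1}"
  shows "Im (gg S t) = 0 \<or> (\<exists>n v. n \<ge> 1 \<and> n \<in> S \<and> aa n < t \<and> t \<le> 1 / real n \<and> gg S t = circp n v)"
proof (cases "t = 0")
  case True then show ?thesis by (simp add: gg_def)
next
  case False
  then have tp: "0 < t" "t \<le> 1" using t by auto
  define n where "n = nat \<lfloor>1/t\<rfloor>"
  have fp: "n \<ge> 1" "1 / real (n+1) < t" "t \<le> 1 / real n" using floor_props[OF tp] by (auto simp: n_def)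
  define u where "u = real n * real (n+1) * t - real n"
  have g: "gg S t = piece S n u" unfolding u_def using gg_I[OF fp(1)] fp by auto
  show ?thesis
  proof (cases "n \<in> S \<and> \<not> u \<le> 1/2")
    case True
    have nz: "real n * real (n+1) > 0" using fp(1) by simp
    have "real n + 1/2 < real n * real (n+1) * t" using True by (simp add: u_def)
    then have "aa n < t" unfolding aa_def using nz by (simp add: divide_less_eq mult.commute)
    then show ?thesis using True fp g by (auto simp: piece_def)
  next
    case False
    then show ?thesis using g by (auto simp: piece_def seg_def)
  qed
qed

lemma gg_avoid:
  assumes t: "t \<in> {0..1}" and m: "m \<ge> 1"
  shows "gg S t \<notin> ray m \<or> (m \<in> S \<and> aa m < t \<and> t \<le> 1 / real m \<and> (\<exists>v. gg S t = circp m v))"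
  using gg_cases[OF t, of S]
proof
  assume "Im (gg S t) = 0" then show ?thesis using real_notin_ray by blast
next
  assume "\<exists>n v. n \<ge> 1 \<and> n \<in> S \<and> aa n < t \<and> t \<le> 1 / real n \<and> gg S t = circp n v"
  then obtain n v where nv: "n \<ge> 1" "n \<in> S" "aa n < t" "t \<le> 1 / real n" "gg S t = circp n v" by blast
  show ?thesis
  proof (cases "n = m")
    case True then show ?thesis using nv by blast
  next
    case False
    then show ?thesis using circ_notin_ray[OF nv(1) m False Re_circp] nv(5) by simp
  qed
qed

lemma circp_ne_cc: "circp m v \<noteq> cc m"
  using norm_circp[of m v] rr_pos[of m] by auto

lemma cc_in_ray: "cc m \<in> ray m"
  unfolding ray_def by (rule CollectI, rule exI[of _ 0]) simp

lemma cc_notin_gg: assumes m: "m \<ge> 1" shows "cc m \<notin> path_image (gg S)"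
proof
  assume "cc m \<in> path_image (gg S)"
  then obtain t where t: "t \<in> {0..1}" "gg S t = cc m" unfolding path_image_def by auto
  show False using gg_avoid[OF t(1) m, of S] t(2) cc_in_ray[of m] circp_ne_cc by metis
qed

lemma cc_notin_seg: "cc m \<notin> closed_segment 1 0"
proof
  assume "cc m \<in> closed_segment 1 0"
  then obtain u :: real where u: "cc m = (1 - u) *\<^sub>R 1 + u *\<^sub>R 0" unfolding closed_segment_def by blast
  then have "Im (cc m) = 0" by simp
  then show False using rr_pos[of m] by (simp add: cc_def)
qed

lemma seg_notin_ray: "closed_segment 1 0 \<inter> ray m = {}"
proof -
  have "Im z = 0" if "z \<in> closed_segment 1 0" for z :: complex
    using that unfolding closed_segment_def by auto
  then show ?thesis using real_notin_ray by blast
qed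


lemma wn_circp: "winding_number (circp m) (cc m) = 1"
proof -
  define q where "q w = complex_of_real (ln (rr m)) + \<i> * complex_of_real (- (pi / 2) + 2 * pi * w)" for w
  have eq: "(\<lambda>w. circp m w - cc m) = exp \<circ> q"
  proof
    fix w
    have "exp (q w) = exp (complex_of_real (ln (rr m))) * exp (\<i> * complex_of_real (- (pi / 2) + 2 * pi * w))"
      unfolding q_def by (rule exp_add)
    also have "exp (complex_of_real (ln (rr m))) = complex_of_real (rr m)"
      using rr_pos[of m] by (simp add: exp_of_real)
    finally show "circp m w - cc m = (exp \<circ> q) w" by (simp add: circp_def)
  qed
  have pq: "path q" unfolding path_def q_def by (intro continuous_intros)
  have "winding_number (circp m) (cc m) = winding_number (\<lambda>w. circp m w - cc m) 0"
    by (rule winding_number_offset)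
  also have "\<dots> = (pathfinish q - pathstart q) / (2 * of_real pi * \<i>)"
    unfolding eq by (rule winding_number_compose_exp[OF pq])
  also have "pathfinish q - pathstart q = 2 * of_real pi * \<i>"
    by (simp add: pathfinish_def pathstart_def q_def algebra_simps)
  finally show ?thesis by simp
qed

lemma wn_kk_out:
  assumes m: "m \<ge> 1" and S: "m \<notin> S"
  shows "winding_number (kk S) (cc m) = 0"
proof (rule wn_zero_ray)
  show "path (kk S)" by (rule path_kk)
  show "pathfinish (kk S) = pathstart (kk S)" using kk_loop[of S] by (simp add: loop_at0_def)
  have "path_image (gg S) \<inter> ray m = {}"
    unfolding path_image_def using gg_avoid[OF _ m, of _ S] S by auto
  then show "path_image (kk S) \<inter> ray m = {}"
    unfolding path_image_kk using seg_notin_ray by blast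
qed

lemma wn_kk_in:
  assumes m: "m \<ge> 1" and S: "m \<in> S"
  shows "winding_number (kk S) (cc m) = 1"
proof -
  define a where "a = aa m"
  define b where "b = 1 / real m"
  have nz: "real m * real (m+1) > 0" using m by simp
  have ma: "real m * real (m+1) * a = real m + 1/2" unfolding a_def aa_def using nz m by simp
  have mb: "real m * real (m+1) * b = real m + 1" unfolding b_def using m by simp
  have aI: "a \<in> {1 / real (m+1) .. 1 / real m}"
  proof -
    have e1: "1 / real (m+1) = real m / (real m * real (m+1))" using m by simp
    have e2: "1 / real m = real (m + 1) / (real m * real (m+1))" using m by simp
    show ?thesis unfolding atLeastAtMost_iff a_def aa_def e1 e2 using nz
      by (intro conjI divide_right_mono) auto
  qed
  have a0: "0 \<le> a" using aI by (auto intro: order_trans[of 0 "1 / real (m+1)"])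
  have ab: "a \<le> b" using aI by (simp add: b_def)
  have b1: "b \<le> 1" using m by (simp add: b_def)
  have bI: "b \<in> {1 / real (m+1) .. 1 / real m}" using aI ab by (simp add: b_def)
  have ga: "gg S a = complex_of_real (1 / real m)"
    using gg_I[OF m aI, of S] ma S by (simp add: piece_def seg_1)
  have gb: "gg S b = complex_of_real (1 / real m)"
    using gg_I[OF m bI, of S] mb by (simp add: piece_1)
  have subc: "subpath a b (gg S) u = circp m u" if u: "u \<in> {0..1}" for u
  proof -
    define t where "t = (b - a) * u + a"
    have tI: "t \<in> {1 / real (m+1) .. 1 / real m}"
    proof -
      have "(b - a) * u \<le> (b - a) * 1" using u ab by (intro mult_left_mono) auto
      moreover have "0 \<le> (b - a) * u" using u ab by simp
      ultimately show ?thesis using aI ab unfolding t_def b_def by auto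
    qed
    have "real m * real (m+1) * t - real m = u / 2 + 1 / 2"
    proof -
      have "real m * real (m+1) * t = (real m * real (m+1) * b - real m * real (m+1) * a) * u + real m * real (m+1) * a"
        unfolding t_def by (simp add: algebra_simps)
      also have "\<dots> = u / 2 + real m + 1 / 2" using ma mb by simp
      finally show ?thesis by simp
    qed
    then have g: "gg S t = piece S m (u / 2 + 1 / 2)" using gg_I[OF m tI, of S] by simp
    show ?thesis
    proof (cases "u = 0")
      case True
      then show ?thesis using g S unfolding subpath_def t_def[symmetric]
        by (simp add: piece_def seg_1 circp_0)
    next
      case False
      then have "\<not> u / 2 + 1 / 2 \<le> 1 / 2" using u by simp
      then show ?thesis using g S unfolding subpath_def t_def[symmetric] by (simp add: piece_def)
    qed
  qed
  have wc: "winding_number (subpath a b (gg S)) (cc m) = 1"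
    using winding_number_cong[of "subpath a b (gg S)" "circp m" "cc m"] subc wn_circp by simp
  have pg: "path (gg S)" by (rule path_gg)
  have zg: "cc m \<notin> path_image (gg S)" by (rule cc_notin_gg[OF m])
  have I0: "0 \<in> {0..1::real}" and I1: "1 \<in> {0..1::real}" by auto
  have Ia: "a \<in> {0..1}" using a0 ab b1 by auto
  have Ib: "b \<in> {0..1}" using a0 ab b1 by auto
  have s1: "winding_number (gg S) (cc m) = winding_number (subpath 0 a (gg S)) (cc m) + winding_number (subpath a 1 (gg S)) (cc m)"
    using winding_number_subpath_combine[OF pg zg I0 Ia I1] by simp
  have s2: "winding_number (subpath a 1 (gg S)) (cc m) = winding_number (subpath a b (gg S)) (cc m) + winding_number (subpath b 1 (gg S)) (cc m)"
    using winding_number_subpath_combine[OF pg zg Ia Ib I1] by simp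
  have zs: "cc m \<notin> closed_segment 1 0" by (rule cc_notin_seg)
  have s3: "winding_number (kk S) (cc m) = winding_number (gg S) (cc m) + winding_number (linepath 1 0) (cc m)"
    unfolding kk_def by (rule winding_number_join[OF pg zg]) (use zs pf_gg in auto)
  \<comment> \<open>the rest is a loop avoiding the ray\<close>
  define P1 where "P1 = subpath 0 a (gg S)"
  define P2 where "P2 = subpath b 1 (gg S)"
  have pP1: "path P1" unfolding P1_def using pg I0 Ia by simp
  have pP2: "path P2" unfolding P2_def using pg Ib I1 by simp
  have iP1: "path_image P1 = gg S ` {0..a}" unfolding P1_def using a0 by (simp add: path_image_subpath)
  have iP2: "path_image P2 = gg S ` {b..1}" unfolding P2_def using b1 by (simp add: path_image_subpath)
  have zP1: "cc m \<notin> path_image P1" using zg pg unfolding P1_def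
    by (meson I0 Ia path_image_subpath_subset subsetD)
  have zP2: "cc m \<notin> path_image P2" using zg pg unfolding P2_def
    by (meson Ib I1 path_image_subpath_subset subsetD)
  have f2: "pathfinish P2 = pathstart (linepath 1 0)" unfolding P2_def by (simp add: gg_1)
  have f1: "pathfinish P1 = pathstart (P2 +++ linepath 1 0)" unfolding P1_def P2_def using ga gb by simp
  have pP2l: "path (P2 +++ linepath 1 0)" using pP2 f2 by simp
  have zP2l: "cc m \<notin> path_image (P2 +++ linepath 1 0)" using zP2 zs path_image_join[OF f2] by simp
  have j1: "winding_number (P1 +++ (P2 +++ linepath 1 0)) (cc m) = winding_number P1 (cc m) + winding_number (P2 +++ linepath 1 0) (cc m)"
    by (rule winding_number_join[OF pP1 zP1 pP2l zP2l f1])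
  have j2: "winding_number (P2 +++ linepath 1 0) (cc m) = winding_number P2 (cc m) + winding_number (linepath 1 0) (cc m)"
    by (rule winding_number_join[OF pP2 zP2]) (use zs f2 in auto)
  have av1: "gg S t \<notin> ray m" if "t \<in> {0..a}" for t
  proof -
    have "t \<in> {0..1}" using that ab b1 by auto
    then show ?thesis using gg_avoid[OF _ m, of t S] that unfolding a_def by auto
  qed
  have av2: "gg S t \<notin> ray m" if "t \<in> {b..1}" for t
  proof (cases "t = b")
    case True then show ?thesis using gb real_notin_ray by simp
  next
    case False
    then have "b < t" using that by simp
    have "t \<in> {0..1}" using that a0 ab by auto
    then show ?thesis using gg_avoid[OF _ m, of t S] \<open>b < t\<close> unfolding b_def by auto
  qed
  have w0: "winding_number (P1 +++ (P2 +++ linepath 1 0)) (cc m) = 0"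
  proof (rule wn_zero_ray)
    show "path (P1 +++ (P2 +++ linepath 1 0))" using pP1 pP2l f1 by simp
    show "pathfinish (P1 +++ (P2 +++ linepath 1 0)) = pathstart (P1 +++ (P2 +++ linepath 1 0))"
      by (simp add: P1_def gg_0)
    show "path_image (P1 +++ (P2 +++ linepath 1 0)) \<inter> ray m = {}"
      unfolding path_image_join[OF f1] path_image_join[OF f2] iP1 iP2 path_image_linepath
      using av1 av2 seg_notin_ray by blast
  qed
  show ?thesis using s1 s2 s3 wc j1 j2 w0 unfolding P1_def P2_def by simp
qed


lemma cc_notin_W: assumes m: "m \<ge> 1" shows "cc m \<notin> W"
proof
  assume "cc m \<in> W"
  then consider (real) x where "cc m = complex_of_real x"
    | (circ) n \<theta> where "n \<ge> 1" "cc m = complex_of_real (1 / 2 ^ (n + 1)) * exp (2 * of_real pi * \<i> * complex_of_real \<theta>)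
          + complex_of_real (1 / real n) + \<i> * complex_of_real (1 / 2 ^ (n + 1))"
    unfolding W_def by blast
  then show False
  proof cases
    case real
    then have "Im (cc m) = 0" by simp
    then show False using rr_pos[of m] by (simp add: cc_def)
  next
    case circ
    define E where "E = exp (2 * of_real pi * \<i> * complex_of_real \<theta>)"
    have E1: "cmod E = 1" unfolding E_def by (simp add: norm_exp)
    have eq: "cc m = complex_of_real (rr n) * E + cc n" using circ(2) unfolding E_def cc_def rr_def by simp
    show False
    proof (cases "n = m")
      case True
      then have "complex_of_real (rr n) * E = 0" using eq by simp
      then show False using E1 rr_pos[of n] by auto
    next
      case False
      have "Re (cc m) - 1 / real n = Re (complex_of_real (rr n) * E)" using eq by (simp add: cc_def)
      also have "\<bar>\<dots>\<bar> \<le> cmod (complex_of_real (rr n) * E)" by (rule abs_Re_le_cmod)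
      also have "\<dots> = rr n" using E1 rr_pos[of n] by (simp add: norm_mult)
      finally have "\<bar>1 / real m - 1 / real n\<bar> \<le> rr n" by (simp add: cc_def)
      then show False using sep[OF circ(1) m False] by (simp add: abs_minus_commute)
    qed
  qed
qed

lemma nonhom:
  assumes m: "m \<ge> 1" and "m \<in> S" "m \<notin> T"
  shows "\<not> homotopic_paths W (kk S) (kk T)"
proof
  assume h: "homotopic_paths W (kk S) (kk T)"
  have "W \<subseteq> - {cc m}" using cc_notin_W[OF m] by blast
  then have "homotopic_paths (- {cc m}) (kk S) (kk T)" using h homotopic_paths_subset by blast
  then have "winding_number (kk S) (cc m) = winding_number (kk T) (cc m)"
    by (rule winding_number_homotopic_paths)
  then show False using wn_kk_in[OF m assms(2)] wn_kk_out[OF m assms(3)] by simp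
qed

lemma kk_in_hclass: "kk S \<in> hclass (kk S)"
  unfolding hclass_def using kk_loop[of S] by (simp add: loop_at0_def homotopic_paths_refl)

lemma lower: "(UNIV :: real set) \<lesssim> P_omega"
proof -
  have "(UNIV :: real set) \<lesssim> (UNIV :: nat set set)"
    using eqpoll_imp_lepoll eqpoll_sym nat_sets_eqpoll_reals by blast
  also have "(UNIV :: nat set set) \<lesssim> P_omega"
    unfolding lepoll_def
  proof (intro exI conjI)
    show "inj_on (\<lambda>A. hclass (kk (Suc ` A))) UNIV"
    proof (rule inj_onI)
      fix A B :: "nat set" assume eq: "hclass (kk (Suc ` A)) = hclass (kk (Suc ` B))"
      show "A = B"
      proof (rule ccontr)
        assume "A \<noteq> B"
        then obtain j where "j \<in> A \<and> j \<notin> B \<or> j \<in> B \<and> j \<notin> A" by blast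
        then show False
        proof
          assume j: "j \<in> A \<and> j \<notin> B"
          have "kk (Suc ` B) \<in> hclass (kk (Suc ` A))" using eq kk_in_hclass by simp
          then have "homotopic_paths W (kk (Suc ` A)) (kk (Suc ` B))" by (simp add: hclass_def)
          then show False using nonhom[of "Suc j" "Suc ` A" "Suc ` B"] j by auto
        next
          assume j: "j \<in> B \<and> j \<notin> A"
          have "kk (Suc ` A) \<in> hclass (kk (Suc ` B))" using eq[symmetric] kk_in_hclass[of "Suc ` A"] by simp
          then have "homotopic_paths W (kk (Suc ` B)) (kk (Suc ` A))" by (simp add: hclass_def)
          then show False using nonhom[of "Suc j" "Suc ` B" "Suc ` A"] j by auto
        qed
      qed
    qed
    show "(\<lambda>A. hclass (kk (Suc ` A))) ` UNIV \<subseteq> P_omega"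
      unfolding P_omega_def using omega_words.gen[OF omega_kk] by blast
  qed
  finally show ?thesis .
qed


lemma omega_words_paths: "p \<in> omega_words \<Longrightarrow> path p \<and> path_image p \<subseteq> W \<and> pathstart p = 0 \<and> pathfinish p = 0"
proof (induction rule: omega_words.induct)
  case unit
  have "(0::complex) \<in> W" using real_in_W[of 0] by simp
  then show ?case by (simp add: pathstart_def pathfinish_def path_def)
next
  case (gen k) then show ?case by (simp add: omega_loop_def loop_at0_def)
next
  case (inv p) then show ?case by (simp add: path_image_reversepath)
next
  case (mult p q) then show ?case by (simp add: path_image_join)
qed

definition CC :: "(real \<Rightarrow> complex) set" where
  "CC = {p. continuous_on {0..1} p \<and> (\<forall>t. t \<notin> {0..1} \<longrightarrow> p t = 0)}"

lemma P_omega_sub: "P_omega \<subseteq> hclass ` CC"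
proof
  fix X assume "X \<in> P_omega"
  then obtain p where p: "p \<in> omega_words" "X = hclass p" unfolding P_omega_def by blast
  define p' where "p' = (\<lambda>t. if t \<in> {0..1} then p t else 0)"
  have pp: "path p" "path_image p \<subseteq> W" using omega_words_paths[OF p(1)] by auto
  have h: "homotopic_paths W p p'" by (rule homotopic_paths_eq[OF pp]) (simp add: p'_def)
  have "hclass p = hclass p'"
    unfolding hclass_def using h homotopic_paths_trans homotopic_paths_sym by blast
  moreover have "p' \<in> CC"
    unfolding CC_def p'_def using pp(1) unfolding path_def
    by (auto intro: continuous_on_eq)
  ultimately show "X \<in> hclass ` CC" using p(2) by blast
qed

lemma dyadic_dense:
  assumes p: "continuous_on {0..1} p" and q: "continuous_on {0..1::real} (q :: real \<Rightarrow> complex)"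
    and eq: "\<And>k i. real i / 2 ^ k \<in> {0..1} \<Longrightarrow> p (real i / 2 ^ k) = q (real i / 2 ^ k)"
    and t: "t \<in> {0..1}"
  shows "p t = q t"
proof -
  define D where "D = {0..1::real} \<inter> (\<Union>k m. {real m / 2^k})"
  have cD: "closure D = {0..1}"
    unfolding D_def using closure_dyadic_rationals_in_convex_set_pos_1[of "{0..1::real}"] by simp
  have cl: "closed {x \<in> {0..1}. (\<lambda>x. p x - q x) x = 0}"
    by (rule continuous_closed_preimage_constant) (auto intro: continuous_intros p q)
  have "D \<subseteq> {x \<in> {0..1}. (\<lambda>x. p x - q x) x = 0}"
    unfolding D_def using eq by auto
  then have "closure D \<subseteq> {x \<in> {0..1}. (\<lambda>x. p x - q x) x = 0}" using cl by (rule closure_minimal)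
  then show ?thesis using t cD by auto
qed

lemma CC_lepoll: "CC \<lesssim> (UNIV :: nat set set)"
proof -
  have "(UNIV :: real set) \<lesssim> (UNIV :: nat set set)"
    using eqpoll_imp_lepoll eqpoll_sym nat_sets_eqpoll_reals by blast
  then obtain e0 :: "real \<Rightarrow> nat set" where e0: "inj e0" unfolding lepoll_def by blast
  define enc where "enc z = (\<lambda>j. prod_encode (0, j)) ` e0 (Re z) \<union> (\<lambda>j. prod_encode (1, j)) ` e0 (Im z)" for z :: complex
  have mem0: "prod_encode (0, j) \<in> enc z \<longleftrightarrow> j \<in> e0 (Re z)" for j z by (auto simp: enc_def)
  have mem1: "prod_encode (1, j) \<in> enc z \<longleftrightarrow> j \<in> e0 (Im z)" for j z by (auto simp: enc_def)
  have inj_enc: "inj enc"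
  proof (rule injI)
    fix z w assume "enc z = enc w"
    then have "e0 (Re z) = e0 (Re w)" "e0 (Im z) = e0 (Im w)"
      using mem0[of _ z] mem0[of _ w] mem1[of _ z] mem1[of _ w] by blast+
    then have "Re z = Re w" "Im z = Im w" using e0 by (auto dest: injD)
    then show "z = w" by (rule complex_eqI)
  qed
  define \<Phi> where "\<Phi> p = {prod_encode (prod_encode (k, i), j) | k i j. j \<in> enc (p (real i / 2 ^ k))}" for p :: "real \<Rightarrow> complex"
  have memP: "prod_encode (prod_encode (k, i), j) \<in> \<Phi> p \<longleftrightarrow> j \<in> enc (p (real i / 2 ^ k))" for k i j p
    by (auto simp: \<Phi>_def)
  show ?thesis unfolding lepoll_def
  proof (intro exI conjI)
    show "inj_on \<Phi> CC"
    proof (rule inj_onI)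
      fix p q assume pC: "p \<in> CC" and qC: "q \<in> CC" and e: "\<Phi> p = \<Phi> q"
      have "enc (p (real i / 2 ^ k)) = enc (q (real i / 2 ^ k))" for i k
        using memP[of k i _ p] memP[of k i _ q] e by blast
      then have pq: "p (real i / 2 ^ k) = q (real i / 2 ^ k)" for i k using inj_enc by (meson injD)
      show "p = q"
      proof
        fix t
        show "p t = q t"
        proof (cases "t \<in> {0..1}")
          case True
          have "continuous_on {0..1} p" "continuous_on {0..1} q" using pC qC by (auto simp: CC_def)
          then show ?thesis using dyadic_dense[of p q t] pq True by blast
        next
          case False then show ?thesis using pC qC by (simp add: CC_def)
        qed
      qed
    qed
    show "\<Phi> ` CC \<subseteq> UNIV" by simp
  qed
qed

lemma upper: "P_omega \<lesssim> (UNIV :: real set)"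
proof -
  have "P_omega \<lesssim> CC" using P_omega_sub by (rule subset_image_lepoll)
  also have "CC \<lesssim> (UNIV :: nat set set)" by (rule CC_lepoll)
  also have "(UNIV :: nat set set) \<lesssim> (UNIV :: real set)"
    using eqpoll_imp_lepoll nat_sets_eqpoll_reals by blast
  finally show ?thesis .
qed

theorem lemma12p2:
  shows "P_omega \<approx> (UNIV :: real set)"
  by (rule lepoll_antisym[OF upper lower])

end
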